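(* Let $f:[0,\infty)\to\mathbb{R}$ be a circularly symmetric surface brightness profile satisfying conditions (1) and (2b) below. Let $p>0$ and let $f_{\rm c}$ be the convolution of $f$ with the normalized gaussian beam $\frac{p}{\pi}e^{-p(x^2+y^2)}$. Suppose $0<p'<p$ is the width parameter of a least-squares gaussian fit $a'e^{-p'r^2}$ to $f_{\rm c}$, in the sense that \[ \int_0^\infty f_{\rm c}(r)\,(1-2p'r^2)\,r\,e^{-p'r^2}\,dr=0. \] Define $\Phi_{\rm b}=2\sqrt{\ln2/p}$, $\Phi=2\sqrt{\ln 2/p'}$, $\Phi_{\rm d}=\sqrt{\Phi^2-\Phi_{\rm b}^2}$, $\beta=\Phi_{\rm d}/\Phi_{\rm b}$ and $\gamma=2/\Phi_{\rm d}$. Then \[ \sum_{n=0}^\infty \frac{c_{2n}\,\gamma^{2n}(\ln 2)^n}{n!}\sum_{k=0}^n(-1)^{n-k}\binom{n}{k}(\beta^2-2k)\,\beta^{2n-2}\left(\frac{\beta^2+1}{\beta^2+2}\right)^k=0. \]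
   Context: A circularly symmetric function on the plane is identified with a function of the radius $r$. For $n\in\mathbb{N}_0$ define the radial moments $c_n=2\pi\int_0^\infty f(r)\,r^{n+1}\,dr$. Condition (1): there is a constant $F$ with $0\le f(r)\le F$ for all $r\in[0,\infty)$, $c_0$ exists and $c_0>0$. Condition (2b): $c_{2n}$ exists for all $n\in\mathbb{N}_0$ and $c_n^{1/n}=o(n^{1/2})$ as $n\to\infty$. (The quantity $\gamma$ is the conversion factor from the deconvolved FWHM $\Phi_{\rm d}$ to the diameter $2$ of the source, the source radius being normalized to $1$.) *)

theory Defs
  imports "HOL-Analysis.Analysis" "HOL-Library.Landau_Symbols"
begin

definition radial_moment :: "(real \<Rightarrow> real) \<Rightarrow> nat \<Rightarrow> real" where
  "radial_moment f n = 2 * pi * (LBINT r:{0..}. f r * r ^ (n + 1))"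

definition moment_exists :: "(real \<Rightarrow> real) \<Rightarrow> nat \<Rightarrow> bool" where
  "moment_exists f n \<longleftrightarrow> set_integrable lborel {0..} (\<lambda>r. f r * r ^ (n + 1))"

definition cond1 :: "(real \<Rightarrow> real) \<Rightarrow> bool" where
  "cond1 f \<longleftrightarrow> (\<exists>F. \<forall>r\<ge>0. 0 \<le> f r \<and> f r \<le> F)
      \<and> moment_exists f 0 \<and> radial_moment f 0 > 0"

definition cond2b :: "(real \<Rightarrow> real) \<Rightarrow> bool" where
  "cond2b f \<longleftrightarrow> (\<forall>n. moment_exists f (2 * n))
      \<and> (\<lambda>n. radial_moment f n powr (1 / real n)) \<in> o(\<lambda>n. sqrt (real n))"

text \<open>Convolution of the circularly symmetric profile f with the normalized gaussian beam
  (p/pi) exp(-p(x^2+y^2)), evaluated at the point (r,0) (i.e. as a function of radius).\<close>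
definition conv_gauss :: "(real \<Rightarrow> real) \<Rightarrow> real \<Rightarrow> real \<Rightarrow> real" where
  "conv_gauss f p r = (LINT z|lborel.
      f (sqrt ((fst z)\<^sup>2 + (snd z)\<^sup>2)) * (p / pi) * exp (- p * ((r - fst z)\<^sup>2 + (snd z)\<^sup>2)))"

definition Phi_b :: "real \<Rightarrow> real" where "Phi_b p = 2 * sqrt (ln 2 / p)"
definition Phi_fit :: "real \<Rightarrow> real" where "Phi_fit p' = 2 * sqrt (ln 2 / p')"
definition Phi_d :: "real \<Rightarrow> real \<Rightarrow> real" where
  "Phi_d p p' = sqrt ((Phi_fit p')\<^sup>2 - (Phi_b p)\<^sup>2)"
definition beta_ratio :: "real \<Rightarrow> real \<Rightarrow> real" where
  "beta_ratio p p' = Phi_d p p' / Phi_b p"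
definition gamma_conv :: "real \<Rightarrow> real \<Rightarrow> real" where
  "gamma_conv p p' = 2 / Phi_d p p'"

end

theory Submission
  imports Defs "HOL-Probability.Distributions"
begin

lemma measure_eqI_lessThan_real:
  fixes M N :: "real measure"
  assumes sets: "sets M = sets borel" "sets N = sets borel"
  assumes fin: "\<And>x. emeasure M {..<x} < \<infinity>"
  assumes eq: "\<And>x. emeasure M {..<x} = emeasure N {..<x}"
  shows "M = N"
proof (rule measure_eqI_generator_eq_countable[where E="range lessThan" and \<Omega>=UNIV
      and A="range (\<lambda>n::nat. {..<real n})"])
  show "Int_stable (range lessThan :: real set set)"
    unfolding Int_stable_def
  proof clarify
    fix a b :: real
    show "{..<a} \<inter> {..<b} \<in> range lessThan"
      by (rule range_eqI[of _ _ "min a b"]) auto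
  qed
  show "sets M = sigma_sets UNIV (range lessThan)" "sets N = sigma_sets UNIV (range lessThan)"
    unfolding sets borel_Iio by auto
  show "(\<Union>(range (\<lambda>n::nat. {..<real n}))) = UNIV"
    by (auto intro: reals_Archimedean2)
qed (use fin eq in \<open>auto simp: less_top\<close>)

definition polar_dens :: "real \<Rightarrow> real" where
  "polar_dens r = indicator {0..} r * (2 * pi * r)"

lemma polar_dens_nonneg: "polar_dens r \<ge> 0"
  by (simp add: polar_dens_def indicator_def)

lemma polar_dens_meas[measurable]: "polar_dens \<in> borel_measurable borel"
  unfolding polar_dens_def by measurable

lemma emeasure_dens_lessThan:
  "emeasure (density lborel (\<lambda>r. ennreal (polar_dens r))) {..<a} = ennreal (pi * (max a 0)^2)"
proof (cases "a \<ge> 0")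
  case True
  have "emeasure (density lborel (\<lambda>r. ennreal (polar_dens r))) {..<a}
      = (\<integral>\<^sup>+ x. ennreal (polar_dens x) * indicator {..<a} x \<partial>lborel)"
    by (subst emeasure_density) auto
  also have "\<dots> = (\<integral>\<^sup>+ x. ennreal (2 * pi * x) * indicator {0..a} x \<partial>lborel)"
  proof (rule nn_integral_cong_AE)
    show "AE x in lborel. ennreal (polar_dens x) * indicator {..<a} x = ennreal (2 * pi * x) * indicator {0..a} x"
      using AE_lborel_singleton[of a]
      by eventually_elim (auto simp: polar_dens_def indicator_def)
  qed
  also have "\<dots> = ennreal (pi * a^2 - pi * 0^2)"
    by (rule nn_integral_FTC_Icc) (auto intro!: derivative_eq_intros simp: True)
  finally show ?thesis using True by simp
next
  case False
  have "emeasure (density lborel (\<lambda>r. ennreal (polar_dens r))) {..<a}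
      = (\<integral>\<^sup>+ x. ennreal (polar_dens x) * indicator {..<a} x \<partial>lborel)"
    by (subst emeasure_density) auto
  also have "(\<lambda>x. ennreal (polar_dens x) * indicator {..<a} x) = (\<lambda>x. 0)"
    using False by (auto simp: polar_dens_def indicator_def fun_eq_iff)
  finally show ?thesis using False by simp
qed

lemma emeasure_norm_lessThan:
  "emeasure (distr (lborel :: (real \<times> real) measure) borel norm) {..<a} = ennreal (pi * (max a 0)^2)"
proof -
  have "emeasure (distr (lborel :: (real \<times> real) measure) borel norm) {..<a}
      = emeasure lborel (ball (0::real\<times>real) a)"
    by (subst emeasure_distr) (auto simp: ball_def intro!: arg_cong[where f="emeasure lborel"])
  also have "\<dots> = ennreal (pi * (max a 0)^2)"
  proof (cases "a \<ge> 0")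
    case True
    then show ?thesis by (simp add: emeasure_ball unit_ball_vol_2 power2_eq_square)
  next
    case False
    then show ?thesis by (simp add: ball_empty)
  qed
  finally show ?thesis .
qed

lemma distr_norm_lborel:
  "distr (lborel :: (real \<times> real) measure) borel norm = density lborel (\<lambda>r. ennreal (polar_dens r))"
  by (rule measure_eqI_lessThan_real) (auto simp: emeasure_norm_lessThan emeasure_dens_lessThan)

lemma polar_integral:
  fixes h :: "real \<Rightarrow> real"
  assumes [measurable]: "h \<in> borel_measurable borel"
  shows "(\<integral>x. h (norm x) \<partial>(lborel :: (real \<times> real) measure)) = (\<integral>r. polar_dens r * h r \<partial>lborel)"
proof -
  have "(\<integral>x. h (norm x) \<partial>(lborel :: (real \<times> real) measure))
      = integral\<^sup>L (distr (lborel :: (real \<times> real) measure) borel norm) h"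
    by (subst integral_distr) auto
  also have "\<dots> = (\<integral>r. polar_dens r * h r \<partial>lborel)"
    by (simp add: distr_norm_lborel integral_density polar_dens_nonneg)
  finally show ?thesis .
qed

lemma polar_integrable:
  fixes h :: "real \<Rightarrow> real"
  assumes [measurable]: "h \<in> borel_measurable borel"
  shows "integrable (lborel :: (real \<times> real) measure) (\<lambda>x. h (norm x)) \<longleftrightarrow> integrable lborel (\<lambda>r. polar_dens r * h r)"
proof -
  have "integrable (lborel :: (real \<times> real) measure) (\<lambda>x. h (norm x))
      \<longleftrightarrow> integrable (distr (lborel :: (real \<times> real) measure) borel norm) h"
    by (subst integrable_distr_eq) auto
  also have "\<dots> \<longleftrightarrow> integrable lborel (\<lambda>r. polar_dens r * h r)"
    by (simp add: distr_norm_lborel integrable_density polar_dens_nonneg)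
  finally show ?thesis .
qed

lemma nn_integral_shift_real:
  fixes h :: "real \<Rightarrow> ennreal"
  assumes [measurable]: "h \<in> borel_measurable borel"
  shows "(\<integral>\<^sup>+x. h (x + c) \<partial>lborel) = (\<integral>\<^sup>+x. h x \<partial>lborel)"
proof -
  have "(\<integral>\<^sup>+x. h x \<partial>lborel) = (\<integral>\<^sup>+x. h x \<partial>distr lborel borel ((+) c))"
    by (simp add: lborel_distr_plus)
  also have "\<dots> = (\<integral>\<^sup>+x. h (c + x) \<partial>lborel)"
    by (subst nn_integral_distr) auto
  finally show ?thesis by (simp add: add.commute)
qed

lemma nn_integral_shear1:
  fixes h :: "real \<times> real \<Rightarrow> ennreal"
  assumes h[measurable]: "h \<in> borel_measurable borel"
  shows "(\<integral>\<^sup>+z. h (fst z + a * snd z, snd z) \<partial>lborel) = (\<integral>\<^sup>+z. h z \<partial>lborel)"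
proof -
  have hm[measurable]: "h \<in> borel_measurable (lborel \<Otimes>\<^sub>M lborel)"
    using h by (simp add: lborel_prod)
  have "(\<integral>\<^sup>+z. h (fst z + a * snd z, snd z) \<partial>lborel)
      = (\<integral>\<^sup>+z. h (fst z + a * snd z, snd z) \<partial>(lborel \<Otimes>\<^sub>M lborel))"
    by (simp add: lborel_prod)
  also have "\<dots> = (\<integral>\<^sup>+y. \<integral>\<^sup>+x. h (x + a * y, y) \<partial>lborel \<partial>lborel)"
    by (subst lborel_pair.nn_integral_snd[symmetric]) auto
  also have "\<dots> = (\<integral>\<^sup>+y. \<integral>\<^sup>+x. h (x, y) \<partial>lborel \<partial>lborel)"
    by (intro nn_integral_cong nn_integral_shift_real[of "\<lambda>x. h (x, _)"]) auto
  also have "\<dots> = (\<integral>\<^sup>+z. h z \<partial>(lborel \<Otimes>\<^sub>M lborel))"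
    by (subst lborel_pair.nn_integral_snd[symmetric]) auto
  also have "\<dots> = (\<integral>\<^sup>+z. h z \<partial>lborel)"
    by (simp add: lborel_prod)
  finally show ?thesis .
qed

lemma nn_integral_shear2:
  fixes h :: "real \<times> real \<Rightarrow> ennreal"
  assumes h[measurable]: "h \<in> borel_measurable borel"
  shows "(\<integral>\<^sup>+z. h (fst z, snd z + b * fst z) \<partial>lborel) = (\<integral>\<^sup>+z. h z \<partial>lborel)"
proof -
  have hm[measurable]: "h \<in> borel_measurable (lborel \<Otimes>\<^sub>M lborel)"
    using h by (simp add: lborel_prod)
  have "(\<integral>\<^sup>+z. h (fst z, snd z + b * fst z) \<partial>lborel)
      = (\<integral>\<^sup>+z. h (fst z, snd z + b * fst z) \<partial>(lborel \<Otimes>\<^sub>M lborel))"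
    by (simp add: lborel_prod)
  also have "\<dots> = (\<integral>\<^sup>+x. \<integral>\<^sup>+y. h (x, y + b * x) \<partial>lborel \<partial>lborel)"
    by (subst lborel.nn_integral_fst[symmetric]) auto
  also have "\<dots> = (\<integral>\<^sup>+x. \<integral>\<^sup>+y. h (x, y) \<partial>lborel \<partial>lborel)"
    by (intro nn_integral_cong nn_integral_shift_real[of "\<lambda>y. h (_, y)"]) auto
  also have "\<dots> = (\<integral>\<^sup>+z. h z \<partial>(lborel \<Otimes>\<^sub>M lborel))"
    by (subst lborel.nn_integral_fst[symmetric]) auto
  also have "\<dots> = (\<integral>\<^sup>+z. h z \<partial>lborel)"
    by (simp add: lborel_prod)
  finally show ?thesis .
qed

definition rot :: "real \<Rightarrow> real \<Rightarrow> real \<times> real \<Rightarrow> real \<times> real" where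
  "rot c s z = (c * fst z - s * snd z, s * fst z + c * snd z)"

lemma rot_meas[measurable]: "rot c s \<in> borel_measurable borel"
  unfolding rot_def by (intro borel_measurable_continuous_onI continuous_intros)

lemma nn_integral_rot_aux:
  fixes h :: "real \<times> real \<Rightarrow> ennreal"
  assumes h[measurable]: "h \<in> borel_measurable borel" and cs: "c\<^sup>2 + s\<^sup>2 = 1" and s: "s \<noteq> 0"
  shows "(\<integral>\<^sup>+z. h (rot c s z) \<partial>lborel) = (\<integral>\<^sup>+z. h z \<partial>lborel)"
proof -
  define a where "a = (c - 1) / s"
  define S1 where "S1 = (\<lambda>z::real\<times>real. (fst z + a * snd z, snd z))"
  define S2 where "S2 = (\<lambda>z::real\<times>real. (fst z, snd z + s * fst z))"
  have m1[measurable]: "S1 \<in> borel_measurable borel" "S2 \<in> borel_measurable borel"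
    unfolding S1_def S2_def by (intro borel_measurable_continuous_onI continuous_intros)+
  have sh1: "(\<integral>\<^sup>+z. g (S1 z) \<partial>lborel) = (\<integral>\<^sup>+z. g z \<partial>lborel)"
    if "g \<in> borel_measurable borel" for g :: "real \<times> real \<Rightarrow> ennreal"
    unfolding S1_def by (rule nn_integral_shear1[OF that])
  have sh2: "(\<integral>\<^sup>+z. g (S2 z) \<partial>lborel) = (\<integral>\<^sup>+z. g z \<partial>lborel)"
    if "g \<in> borel_measurable borel" for g :: "real \<times> real \<Rightarrow> ennreal"
    unfolding S2_def by (rule nn_integral_shear2[OF that])
  have "rot c s z = S1 (S2 (S1 z))" for z
  proof -
    have e1: "1 + a * s = c" using s by (simp add: a_def field_simps)
    have e2: "a + (a + a * (s * a)) = - s"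
    proof -
      have "a + (a + a * (s * a)) = a * (1 + (1 + a * s))" by (simp add: algebra_simps)
      then have "a + (a + a * (s * a)) = a * (1 + c)" using e1 by simp
      also have "\<dots> = (c\<^sup>2 - 1) / s" by (simp add: a_def field_simps power2_eq_square)
      also have "\<dots> = - s" using cs s by (simp add: field_simps power2_eq_square)
      finally show ?thesis .
    qed
    obtain x y where z: "z = (x, y)" by (cases z)
    have f1: "x + a * y + a * (y + s * (x + a * y)) = (1 + a * s) * x + (a + (a + a * (s * a))) * y"
      by (simp add: algebra_simps)
    have f2: "y + s * (x + a * y) = s * x + (1 + a * s) * y"
      by (simp add: algebra_simps)
    have g1: "x + a * y + a * (y + s * (x + a * y)) = c * x - s * y"
      unfolding f1 e1 e2 by simp
    have g2: "y + s * (x + a * y) = s * x + c * y"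
      unfolding f2 e1 ..
    show ?thesis
      unfolding rot_def S1_def S2_def z fst_conv snd_conv unfolding g1 unfolding g2 ..
  qed
  then have "(\<integral>\<^sup>+z. h (rot c s z) \<partial>lborel) = (\<integral>\<^sup>+z. (\<lambda>w. h (S1 (S2 w))) (S1 z) \<partial>lborel)"
    by simp
  also have "\<dots> = (\<integral>\<^sup>+z. (\<lambda>w. h (S1 w)) (S2 z) \<partial>lborel)"
    by (rule sh1) measurable
  also have "\<dots> = (\<integral>\<^sup>+z. h (S1 z) \<partial>lborel)"
    by (rule sh2) measurable
  also have "\<dots> = (\<integral>\<^sup>+z. h z \<partial>lborel)"
    by (rule sh1) measurable
  finally show ?thesis .
qed

lemma nn_integral_rot:
  fixes h :: "real \<times> real \<Rightarrow> ennreal"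
  assumes h[measurable]: "h \<in> borel_measurable borel" and cs: "c\<^sup>2 + s\<^sup>2 = 1"
  shows "(\<integral>\<^sup>+z. h (rot c s z) \<partial>lborel) = (\<integral>\<^sup>+z. h z \<partial>lborel)"
proof (cases "s = 0")
  case False
  then show ?thesis using nn_integral_rot_aux[OF h cs] by simp
next
  case True
  then have "c = 1 \<or> c = -1" using cs by (simp add: power2_eq_1_iff)
  then show ?thesis
  proof
    assume "c = 1"
    then show ?thesis using True by (simp add: rot_def)
  next
    assume c: "c = -1"
    have "rot c s z = rot 0 1 (rot 0 1 z)" for z using c True by (simp add: rot_def)
    then have "(\<integral>\<^sup>+z. h (rot c s z) \<partial>lborel) = (\<integral>\<^sup>+z. (\<lambda>w. h (rot 0 1 w)) (rot 0 1 z) \<partial>lborel)"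
      by simp
    also have "\<dots> = (\<integral>\<^sup>+z. h (rot 0 1 z) \<partial>lborel)"
      by (rule nn_integral_rot_aux) auto
    also have "\<dots> = (\<integral>\<^sup>+z. h z \<partial>lborel)"
      by (rule nn_integral_rot_aux) auto
    finally show ?thesis .
  qed
qed

lemma distr_rot:
  assumes cs: "c\<^sup>2 + s\<^sup>2 = 1"
  shows "distr (lborel :: (real \<times> real) measure) borel (rot c s) = lborel"
proof (rule measure_eqI)
  fix A assume "A \<in> sets (distr (lborel :: (real \<times> real) measure) borel (rot c s))"
  then have A[measurable]: "A \<in> sets borel" by simp
  have "emeasure (distr lborel borel (rot c s)) A = (\<integral>\<^sup>+z. indicator A z \<partial>distr lborel borel (rot c s))"
    by simp
  also have "\<dots> = (\<integral>\<^sup>+z. indicator A (rot c s z) \<partial>lborel)"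
    by (subst nn_integral_distr) auto
  also have "\<dots> = (\<integral>\<^sup>+z. indicator A z \<partial>lborel)"
    by (rule nn_integral_rot[OF _ cs]) measurable
  also have "\<dots> = emeasure lborel A" by simp
  finally show "emeasure (distr lborel borel (rot c s)) A = emeasure lborel A" .
qed simp

lemma integral_rot:
  fixes h :: "real \<times> real \<Rightarrow> real"
  assumes [measurable]: "h \<in> borel_measurable borel" and cs: "c\<^sup>2 + s\<^sup>2 = 1"
  shows "(\<integral>z. h (rot c s z) \<partial>lborel) = (\<integral>z. h z \<partial>lborel)"
proof -
  have "(\<integral>z. h z \<partial>lborel) = (\<integral>z. h z \<partial>distr lborel borel (rot c s))"
    by (simp add: distr_rot[OF cs])
  also have "\<dots> = (\<integral>z. h (rot c s z) \<partial>lborel)"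
    by (subst integral_distr) auto
  finally show ?thesis by simp
qed

lemma norm_rot: "c\<^sup>2 + s\<^sup>2 = 1 \<Longrightarrow> norm (rot c s z) = norm z"
proof -
  assume cs: "c\<^sup>2 + s\<^sup>2 = 1"
  have "(c * fst z - s * snd z)\<^sup>2 + (s * fst z + c * snd z)\<^sup>2 = (c\<^sup>2 + s\<^sup>2) * ((fst z)\<^sup>2 + (snd z)\<^sup>2)"
    by (simp add: power2_eq_square algebra_simps)
  then show ?thesis using cs by (simp add: rot_def norm_prod_def)
qed

lemma rot_diff: "rot c s x - rot c s z = rot c s (x - z)"
  by (simp add: rot_def algebra_simps)

lemma rot_onto:
  fixes x :: "real \<times> real"
  assumes "x \<noteq> 0"
  shows "rot (fst x / norm x) (snd x / norm x) (norm x, 0) = x"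
    and "(fst x / norm x)\<^sup>2 + (snd x / norm x)\<^sup>2 = 1"
proof -
  have n: "norm x > 0" using assms by simp
  show "rot (fst x / norm x) (snd x / norm x) (norm x, 0) = x"
    using n by (simp add: rot_def)
  have e: "(norm x)\<^sup>2 = (fst x)\<^sup>2 + (snd x)\<^sup>2" by (simp add: norm_prod_def)
  have "(fst x / norm x)\<^sup>2 + (snd x / norm x)\<^sup>2 = ((fst x)\<^sup>2 + (snd x)\<^sup>2) / (norm x)\<^sup>2"
    by (simp add: power_divide add_divide_distrib)
  also have "\<dots> = 1" using n by (simp add: e[symmetric])
  finally show "(fst x / norm x)\<^sup>2 + (snd x / norm x)\<^sup>2 = 1" .
qed

lemma gauss0:
  fixes P m :: real assumes P: "P > 0"
  shows "has_bochner_integral lborel (\<lambda>t. exp (- P * (t - m)\<^sup>2)) (sqrt (pi / P))"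
proof -
  define \<sigma> where "\<sigma> = 1 / sqrt (2 * P)"
  have \<sigma>: "\<sigma> > 0" using P by (simp add: \<sigma>_def)
  have s2: "\<sigma>\<^sup>2 = 1 / (2 * P)" using P by (simp add: \<sigma>_def power_divide)
  have nd: "normal_density m \<sigma> t = sqrt (P / pi) * exp (- P * (t - m)\<^sup>2)" for t
    using P by (simp add: normal_density_def s2 real_sqrt_divide field_simps)
  have "has_bochner_integral lborel (normal_density m \<sigma>) 1"
    using has_bochner_integral_integrable[OF integrable_normal_density[OF \<sigma>]] integral_normal_density[OF \<sigma>] by simp
  then have "has_bochner_integral lborel (\<lambda>t. sqrt (pi / P) * normal_density m \<sigma> t) (sqrt (pi / P) * 1)"
    by (rule has_bochner_integral_mult_right)
  moreover have "sqrt (pi / P) * normal_density m \<sigma> t = exp (- P * (t - m)\<^sup>2)" for t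
    unfolding nd using P by (simp add: real_sqrt_mult[symmetric])
  ultimately show ?thesis by simp
qed

lemma gauss2:
  fixes P m :: real assumes P: "P > 0"
  shows "has_bochner_integral lborel (\<lambda>t. t\<^sup>2 * exp (- P * (t - m)\<^sup>2)) (sqrt (pi / P) * (m\<^sup>2 + 1 / (2 * P)))"
proof -
  define \<sigma> where "\<sigma> = 1 / sqrt (2 * P)"
  have \<sigma>: "\<sigma> > 0" using P by (simp add: \<sigma>_def)
  have s2: "\<sigma>\<^sup>2 = 1 / (2 * P)" using P by (simp add: \<sigma>_def power_divide)
  have nd: "normal_density m \<sigma> t = sqrt (P / pi) * exp (- P * (t - m)\<^sup>2)" for t
    using P by (simp add: normal_density_def s2 real_sqrt_divide field_simps)
  have h1: "has_bochner_integral lborel (\<lambda>x. normal_density m \<sigma> x * (x - m) ^ (2 * 1)) (fact (2 * 1) / ((2 / \<sigma>\<^sup>2) ^ 1 * fact 1))"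
    by (rule normal_moment_even[OF \<sigma>])
  have h2: "has_bochner_integral lborel (\<lambda>x. normal_density m \<sigma> x * x) m"
    by (rule normal_moment_nz_1[OF \<sigma>])
  have h3: "has_bochner_integral lborel (normal_density m \<sigma>) 1"
    using has_bochner_integral_integrable[OF integrable_normal_density[OF \<sigma>]] integral_normal_density[OF \<sigma>] by simp
  have "has_bochner_integral lborel (\<lambda>x. normal_density m \<sigma> x * (x - m) ^ (2 * 1) + 2 * m * (normal_density m \<sigma> x * x) - m\<^sup>2 * normal_density m \<sigma> x)
     (fact (2 * 1) / ((2 / \<sigma>\<^sup>2) ^ 1 * fact 1) + 2 * m * m - m\<^sup>2 * 1)"
    by (intro has_bochner_integral_diff has_bochner_integral_add has_bochner_integral_mult_right h1 h2 h3)
  moreover have "(\<lambda>x. normal_density m \<sigma> x * (x - m) ^ (2 * 1) + 2 * m * (normal_density m \<sigma> x * x) - m\<^sup>2 * normal_density m \<sigma> x)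
     = (\<lambda>x. normal_density m \<sigma> x * x\<^sup>2)"
    by (auto simp: fun_eq_iff power2_eq_square algebra_simps)
  moreover have "fact (2 * 1) / ((2 / \<sigma>\<^sup>2) ^ 1 * fact 1) + 2 * m * m - m\<^sup>2 * 1 = m\<^sup>2 + 1 / (2 * P)"
    using s2 by (simp add: power2_eq_square)
  ultimately have "has_bochner_integral lborel (\<lambda>x. normal_density m \<sigma> x * x\<^sup>2) (m\<^sup>2 + 1 / (2 * P))"
    by simp
  then have "has_bochner_integral lborel (\<lambda>t. sqrt (pi / P) * (normal_density m \<sigma> t * t\<^sup>2)) (sqrt (pi / P) * (m\<^sup>2 + 1 / (2 * P)))"
    by (rule has_bochner_integral_mult_right)
  moreover have "sqrt (pi / P) * (normal_density m \<sigma> t * t\<^sup>2) = t\<^sup>2 * exp (- P * (t - m)\<^sup>2)" for t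
    unfolding nd using P by (simp add: real_sqrt_mult[symmetric])
  ultimately show ?thesis by simp
qed

lemma has_bochner_integral_prod2:
  fixes f g :: "real \<Rightarrow> real"
  assumes f: "has_bochner_integral lborel f I" and g: "has_bochner_integral lborel g J"
  shows "has_bochner_integral (lborel :: (real \<times> real) measure) (\<lambda>x. f (fst x) * g (snd x)) (I * J)"
proof -
  have fi: "integrable lborel f" and gi: "integrable lborel g"
    using f g by (simp_all add: has_bochner_integral_iff)
  have [measurable]: "f \<in> borel_measurable borel" "g \<in> borel_measurable borel"
    using fi gi by auto
  have int: "integrable (lborel \<Otimes>\<^sub>M lborel) (\<lambda>x. f (fst x) * g (snd x))"
  proof (rule lborel_pair.Fubini_integrable)
    show "(\<lambda>x. f (fst x) * g (snd x)) \<in> borel_measurable (lborel \<Otimes>\<^sub>M lborel)" by measurable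
    show "integrable lborel (\<lambda>x. \<integral>y. norm (f (fst (x, y)) * g (snd (x, y))) \<partial>lborel)"
      by (simp add: abs_mult integrable_mult_left fi)
    show "AE x in lborel. integrable lborel (\<lambda>y. f (fst (x, y)) * g (snd (x, y)))"
      using gi by simp
  qed
  have "integral\<^sup>L (lborel \<Otimes>\<^sub>M lborel) (\<lambda>x. f (fst x) * g (snd x)) = (\<integral>x. \<integral>y. f x * g y \<partial>lborel \<partial>lborel)"
    using lborel_pair.integral_fst'[OF int] by simp
  also have "\<dots> = I * J"
    using f g by (simp add: has_bochner_integral_integral_eq)
  finally show ?thesis using int
    by (simp add: lborel_prod has_bochner_integral_iff)
qed

lemma gauss_shift:
  fixes p q a t :: real assumes "p + q > 0"
  shows "exp (- p * (t - a)\<^sup>2 - q * t\<^sup>2) = exp (- (p * q / (p + q)) * a\<^sup>2) * exp (- (p + q) * (t - p * a / (p + q))\<^sup>2)"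
proof -
  have "- p * (t - a)\<^sup>2 - q * t\<^sup>2 = - (p * q / (p + q)) * a\<^sup>2 + - (p + q) * (t - p * a / (p + q))\<^sup>2"
  proof -
    have P: "p + q \<noteq> 0" using assms by simp
    define X where "X = (p+q)*t - p*a"
    have e: "t - p*a/(p+q) = X/(p+q)" using P by (simp add: field_simps X_def)
    have poly: "p*q*a\<^sup>2 + X\<^sup>2 = (p+q)*(p*(t-a)\<^sup>2 + q*t\<^sup>2)" by (simp add: X_def power2_eq_square algebra_simps)
    have e2: "(p + q) * (X/(p+q))\<^sup>2 = X\<^sup>2 / (p+q)"
      using P by (simp add: power_divide power2_eq_square)
    have e3: "- (p + q) * (X/(p+q))\<^sup>2 = - (X\<^sup>2/(p+q))" using e2 by (metis minus_mult_left)
    have "- (p * q / (p + q)) * a\<^sup>2 + - (p + q) * (t - p * a / (p + q))\<^sup>2 = - (p*q*a\<^sup>2) / (p+q) - X\<^sup>2/(p+q)"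
      unfolding e e3 by simp
    also have "\<dots> = - (p*q*a\<^sup>2 + X\<^sup>2) / (p+q)" by (metis add_divide_distrib minus_divide_left minus_add_distrib diff_conv_add_uminus)
    also have "\<dots> = - p * (t - a)\<^sup>2 - q * t\<^sup>2" unfolding poly using P by simp
    finally show ?thesis by simp
  qed
  then show ?thesis by (simp add: exp_add[symmetric])
qed

lemma gauss_e0:
  fixes p q a :: real assumes "p \<ge> 0" "p + q > 0"
  shows "has_bochner_integral lborel (\<lambda>t. exp (- p * (t - a)\<^sup>2 - q * t\<^sup>2))
     (exp (- (p * q / (p + q)) * a\<^sup>2) * sqrt (pi / (p + q)))"
  unfolding gauss_shift[OF assms(2)]
  by (intro has_bochner_integral_mult_right gauss0 assms)

lemma gauss_e2:
  fixes p q a :: real assumes "p \<ge> 0" "p + q > 0"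
  shows "has_bochner_integral lborel (\<lambda>t. t\<^sup>2 * exp (- p * (t - a)\<^sup>2 - q * t\<^sup>2))
     (exp (- (p * q / (p + q)) * a\<^sup>2) * (sqrt (pi / (p + q)) * ((p * a / (p + q))\<^sup>2 + 1 / (2 * (p + q)))))"
proof -
  have "has_bochner_integral lborel (\<lambda>t. exp (- (p * q / (p + q)) * a\<^sup>2) * (t\<^sup>2 * exp (- (p + q) * (t - p * a / (p + q))\<^sup>2)))
     (exp (- (p * q / (p + q)) * a\<^sup>2) * (sqrt (pi / (p + q)) * ((p * a / (p + q))\<^sup>2 + 1 / (2 * (p + q)))))"
    by (intro has_bochner_integral_mult_right gauss2 assms)
  then show ?thesis
    unfolding gauss_shift[OF assms(2)] by (simp add: algebra_simps)
qed

definition kern :: "real \<Rightarrow> real \<times> real \<Rightarrow> real" where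
  "kern p y = (p / pi) * exp (- p * (norm y)\<^sup>2)"

definition Jfun :: "real \<Rightarrow> real \<Rightarrow> real \<Rightarrow> real \<Rightarrow> real" where
  "Jfun p q c r = (p / (p + q)) * exp (- (p * q / (p + q)) * r\<^sup>2) *
      (1 + c * q / (p + q) + c * q * p\<^sup>2 * r\<^sup>2 / (p + q)\<^sup>2)"

lemma norm_sq_prod: "(norm (x :: real \<times> real))\<^sup>2 = (fst x)\<^sup>2 + (snd x)\<^sup>2"
  by (simp add: norm_prod_def)

lemma ring_aux: "(p::real) / pi * (X1 * r * (X2 * r) + c * q * (X1 * (r * A1) * (X2 * r)) + c * q * (X1 * r * (X2 * (r * A2))))
  = p / pi * (X1 * X2) * (r * r) * (1 + c * q * A1 + c * q * A2)"
  by (simp add: algebra_simps add_divide_distrib)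

lemma Jint:
  fixes p q c :: real and z :: "real \<times> real"
  assumes p: "p > 0" and q: "q > 0"
  shows "has_bochner_integral lborel (\<lambda>x::real\<times>real. kern p (x - z) * ((1 + c * q * (norm x)\<^sup>2) * exp (- q * (norm x)\<^sup>2)))
           (Jfun p q c (norm z))"
proof -
  define P where "P = p + q"
  have P: "P > 0" using p q by (simp add: P_def)
  define s where "s = p * q / (p + q)"
  define e1 where "e1 = (\<lambda>t. exp (- p * (t - fst z)\<^sup>2 - q * t\<^sup>2))"
  define e2 where "e2 = (\<lambda>t. exp (- p * (t - snd z)\<^sup>2 - q * t\<^sup>2))"
  define E1 where "E1 = exp (- s * (fst z)\<^sup>2) * sqrt (pi / P)"
  define E2 where "E2 = exp (- s * (snd z)\<^sup>2) * sqrt (pi / P)"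
  define M1 where "M1 = exp (- s * (fst z)\<^sup>2) * (sqrt (pi / P) * ((p * fst z / P)\<^sup>2 + 1 / (2 * P)))"
  define M2 where "M2 = exp (- s * (snd z)\<^sup>2) * (sqrt (pi / P) * ((p * snd z / P)\<^sup>2 + 1 / (2 * P)))"
  have i1: "has_bochner_integral lborel e1 E1" "has_bochner_integral lborel e2 E2"
    unfolding e1_def e2_def E1_def E2_def s_def P_def by (rule gauss_e0; use p q in auto)+
  have i2: "has_bochner_integral lborel (\<lambda>t. t\<^sup>2 * e1 t) M1" "has_bochner_integral lborel (\<lambda>t. t\<^sup>2 * e2 t) M2"
    unfolding e1_def e2_def M1_def M2_def s_def P_def by (rule gauss_e2; use p q in auto)+
  have "has_bochner_integral (lborel :: (real \<times> real) measure)
      (\<lambda>x. (p / pi) * (e1 (fst x) * e2 (snd x) + c * q * ((fst x)\<^sup>2 * e1 (fst x) * e2 (snd x))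
         + c * q * (e1 (fst x) * ((snd x)\<^sup>2 * e2 (snd x)))))
      ((p / pi) * (E1 * E2 + c * q * (M1 * E2) + c * q * (E1 * M2)))"
    by (intro has_bochner_integral_mult_right has_bochner_integral_add has_bochner_integral_prod2 i1 i2)
  moreover have "(p / pi) * (e1 (fst x) * e2 (snd x) + c * q * ((fst x)\<^sup>2 * e1 (fst x) * e2 (snd x))
         + c * q * (e1 (fst x) * ((snd x)\<^sup>2 * e2 (snd x))))
      = kern p (x - z) * ((1 + c * q * (norm x)\<^sup>2) * exp (- q * (norm x)\<^sup>2))" for x
  proof -
    have E: "e1 (fst x) * e2 (snd x) = exp (- p * (norm (x - z))\<^sup>2) * exp (- q * (norm x)\<^sup>2)"
      unfolding e1_def e2_def norm_sq_prod exp_add[symmetric] by (simp add: algebra_simps)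
    have "(p / pi) * (e1 (fst x) * e2 (snd x) + c * q * ((fst x)\<^sup>2 * e1 (fst x) * e2 (snd x))
         + c * q * (e1 (fst x) * ((snd x)\<^sup>2 * e2 (snd x))))
       = (p / pi) * (e1 (fst x) * e2 (snd x)) * (1 + c * q * ((fst x)\<^sup>2 + (snd x)\<^sup>2))"
      by (simp add: algebra_simps)
    also have "\<dots> = kern p (x - z) * ((1 + c * q * (norm x)\<^sup>2) * exp (- q * (norm x)\<^sup>2))"
      unfolding E kern_def norm_sq_prod[of x, symmetric] by (simp add: algebra_simps add_divide_distrib)
    finally show ?thesis .
  qed
  moreover have "(p / pi) * (E1 * E2 + c * q * (M1 * E2) + c * q * (E1 * M2)) = Jfun p q c (norm z)"
  proof -
    have ee: "exp (- s * (fst z)\<^sup>2) * exp (- s * (snd z)\<^sup>2) = exp (- s * (norm z)\<^sup>2)"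
      unfolding norm_sq_prod exp_add[symmetric] by (simp add: algebra_simps)
    have sq: "sqrt (pi / P) * sqrt (pi / P) = pi / P" using P by simp
    have "(p / pi) * (E1 * E2 + c * q * (M1 * E2) + c * q * (E1 * M2))
       = (p / pi) * (exp (- s * (fst z)\<^sup>2) * exp (- s * (snd z)\<^sup>2)) * (sqrt (pi / P) * sqrt (pi / P)) *
         (1 + c * q * ((p * fst z / P)\<^sup>2 + 1 / (2 * P)) + c * q * ((p * snd z / P)\<^sup>2 + 1 / (2 * P)))"
      unfolding E1_def E2_def M1_def M2_def by (rule ring_aux)
    also have "\<dots> = (p / P) * exp (- s * (norm z)\<^sup>2) *
         (1 + c * q * ((p * fst z / P)\<^sup>2 + 1 / (2 * P)) + c * q * ((p * snd z / P)\<^sup>2 + 1 / (2 * P)))"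
      unfolding ee sq by simp
    also have "(1 + c * q * ((p * fst z / P)\<^sup>2 + 1 / (2 * P)) + c * q * ((p * snd z / P)\<^sup>2 + 1 / (2 * P)))
        = 1 + c * q / P + c * q * p\<^sup>2 * (norm z)\<^sup>2 / P\<^sup>2"
      unfolding norm_sq_prod using P by (simp add: field_simps power2_eq_square)
    finally show ?thesis unfolding Jfun_def P_def s_def by simp
  qed
  ultimately show ?thesis by simp
qed

definition Wf :: "real \<Rightarrow> real \<Rightarrow> real \<Rightarrow> real" where
  "Wf q c r = (1 + c * q * r\<^sup>2) * exp (- q * r\<^sup>2)"

definition CG :: "(real \<Rightarrow> real) \<Rightarrow> real \<Rightarrow> real \<times> real \<Rightarrow> real" where
  "CG g p x = (\<integral>z. g (norm z) * kern p (x - z) \<partial>lborel)"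

lemma kern_cont: "continuous_on UNIV (kern p)"
  unfolding kern_def by (intro continuous_intros)

lemma kern_nonneg: "p \<ge> 0 \<Longrightarrow> kern p y \<ge> 0"
  unfolding kern_def by simp

lemma meas_prod_lborel:
  fixes h :: "('a::euclidean_space \<times> 'b::euclidean_space) \<Rightarrow> real"
  shows "h \<in> borel_measurable borel \<Longrightarrow> h \<in> borel_measurable (lborel \<Otimes>\<^sub>M lborel)"
  by (simp add: lborel_prod)

context
  fixes g :: "real \<Rightarrow> real" and F p q :: real
  assumes gm[measurable]: "g \<in> borel_measurable borel"
    and g0: "\<And>r. 0 \<le> g r" and gF: "\<And>r. g r \<le> F"
    and i1: "integrable lborel (\<lambda>r. indicator {0..} r * (g r * r))"
    and i3: "integrable lborel (\<lambda>r. indicator {0..} r * (g r * r ^ 3))"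
    and p: "p > 0" and q: "q > 0"
begin

lemma gnorm_meas: "(\<lambda>y. g (norm (h y))) \<in> borel_measurable borel"
  if "continuous_on UNIV h" for h :: "'a::topological_space \<Rightarrow> 'b::real_normed_vector"
  by (rule measurable_compose[OF borel_measurable_continuous_onI gm]) (intro continuous_intros that)

lemma Phi_meas:
  "(\<lambda>y::(real\<times>real)\<times>(real\<times>real). g (norm (fst y)) * kern p (snd y - fst y) * Wf q c (norm (snd y)))
     \<in> borel_measurable borel"
proof -
  have a: "(\<lambda>y::(real\<times>real)\<times>(real\<times>real). g (norm (fst y))) \<in> borel_measurable borel"
    by (rule gnorm_meas) (intro continuous_intros)
  have b: "(\<lambda>y::(real\<times>real)\<times>(real\<times>real). kern p (snd y - fst y) * Wf q c (norm (snd y))) \<in> borel_measurable borel"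
    unfolding kern_def Wf_def by (intro borel_measurable_continuous_onI continuous_intros)
  show ?thesis using borel_measurable_times[OF a b] by (simp add: mult.assoc)
qed

lemma CG_meas: "CG g p \<in> borel_measurable borel"
proof -
  have "(\<lambda>y::(real\<times>real)\<times>(real\<times>real). g (norm (snd y)) * kern p (fst y - snd y)) \<in> borel_measurable borel"
  proof -
    have a: "(\<lambda>y::(real\<times>real)\<times>(real\<times>real). g (norm (snd y))) \<in> borel_measurable borel"
      by (rule gnorm_meas) (intro continuous_intros)
    have b: "(\<lambda>y::(real\<times>real)\<times>(real\<times>real). kern p (fst y - snd y)) \<in> borel_measurable borel"
      unfolding kern_def by (intro borel_measurable_continuous_onI continuous_intros)
    show ?thesis using borel_measurable_times[OF a b] by simp
  qed
  then have "(\<lambda>(x, z). g (norm z) * kern p (x - z)) \<in> borel_measurable (lborel \<Otimes>\<^sub>M lborel)"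
    by (intro meas_prod_lborel) (simp add: case_prod_beta')
  then have "(\<lambda>x. \<integral>z. g (norm z) * kern p (x - z) \<partial>lborel) \<in> borel_measurable lborel"
    by (rule lborel.borel_measurable_lebesgue_integral)
  then show ?thesis unfolding CG_def by simp
qed

lemma CG_rot:
  assumes cs: "c\<^sup>2 + s\<^sup>2 = 1"
  shows "CG g p (rot c s y) = CG g p y"
proof -
  define h where "h = (\<lambda>z. g (norm z) * kern p (rot c s y - z))"
  have hm: "h \<in> borel_measurable borel"
  proof -
    have a: "(\<lambda>z::real\<times>real. g (norm z)) \<in> borel_measurable borel"
      by (rule gnorm_meas) (intro continuous_intros)
    have b: "(\<lambda>z::real\<times>real. kern p (rot c s y - z)) \<in> borel_measurable borel"
      unfolding kern_def by (intro borel_measurable_continuous_onI continuous_intros)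
    show ?thesis using borel_measurable_times[OF a b] by (simp add: h_def)
  qed
  have "h (rot c s z) = g (norm z) * kern p (y - z)" for z
    unfolding h_def rot_diff kern_def norm_rot[OF cs] ..
  then have "CG g p y = (\<integral>z. h (rot c s z) \<partial>lborel)"
    unfolding CG_def by simp
  also have "\<dots> = (\<integral>z. h z \<partial>lborel)"
    by (rule integral_rot[OF hm cs])
  also have "\<dots> = CG g p (rot c s y)"
    unfolding CG_def h_def ..
  finally show ?thesis by simp
qed

lemma CG_radial: "CG g p (norm x, 0) = CG g p x"
proof (cases "x = 0")
  case True
  then show ?thesis by (simp add: zero_prod_def)
next
  case False
  show ?thesis
    using CG_rot[OF rot_onto(2)[OF False], of "(norm x, 0)"] rot_onto(1)[OF False] by simp
qed

lemma int_exp1: "s \<ge> 0 \<Longrightarrow> integrable lborel (\<lambda>r. indicator {0..} r * (g r * r) * exp (- s * r\<^sup>2))"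
proof (rule Bochner_Integration.integrable_bound[OF i1])
  assume s: "s \<ge> 0"
  show "(\<lambda>r. indicator {0..} r * (g r * r) * exp (- s * r\<^sup>2)) \<in> borel_measurable lborel" by simp
  show "AE x in lborel. norm (indicator {0..} x * (g x * x) * exp (- s * x\<^sup>2)) \<le> norm (indicator {0..} x * (g x * x))"
  proof (rule AE_I2)
    fix x :: real
    have "exp (- s * x\<^sup>2) \<le> 1" using s by simp
    moreover have "0 \<le> indicator {0..} x * (g x * x)" using g0[of x] by (simp add: indicator_def)
    ultimately show "norm (indicator {0..} x * (g x * x) * exp (- s * x\<^sup>2)) \<le> norm (indicator {0..} x * (g x * x))"
      by (simp add: abs_mult mult_left_le)
  qed
qed

lemma int_exp3: "s \<ge> 0 \<Longrightarrow> integrable lborel (\<lambda>r. indicator {0..} r * (g r * r ^ 3) * exp (- s * r\<^sup>2))"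
proof (rule Bochner_Integration.integrable_bound[OF i3])
  assume s: "s \<ge> 0"
  show "(\<lambda>r. indicator {0..} r * (g r * r ^ 3) * exp (- s * r\<^sup>2)) \<in> borel_measurable lborel" by simp
  show "AE x in lborel. norm (indicator {0..} x * (g x * x ^ 3) * exp (- s * x\<^sup>2)) \<le> norm (indicator {0..} x * (g x * x ^ 3))"
  proof (rule AE_I2)
    fix x :: real
    have "exp (- s * x\<^sup>2) \<le> 1" using s by simp
    moreover have "0 \<le> indicator {0..} x * (g x * x ^ 3)" using g0[of x] by (simp add: indicator_def)
    ultimately show "norm (indicator {0..} x * (g x * x ^ 3) * exp (- s * x\<^sup>2)) \<le> norm (indicator {0..} x * (g x * x ^ 3))"
      by (simp add: abs_mult mult_left_le)
  qed
qed

definition "sP = p * q / (p + q)"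
definition "I1 = (\<integral>r. indicator {0..} r * (g r * r) * exp (- sP * r\<^sup>2) \<partial>lborel)"
definition "I3 = (\<integral>r. indicator {0..} r * (g r * r ^ 3) * exp (- sP * r\<^sup>2) \<partial>lborel)"

lemma sP_nonneg: "sP \<ge> 0"
  using p q by (simp add: sP_def)

lemma polar_Jfun_eq:
  "polar_dens r * (g r * Jfun p q c r) =
     2 * pi * (p / (p + q)) * ((1 + c * q / (p + q)) * (indicator {0..} r * (g r * r) * exp (- sP * r\<^sup>2))
       + (c * q * p\<^sup>2 / (p + q)\<^sup>2) * (indicator {0..} r * (g r * r ^ 3) * exp (- sP * r\<^sup>2)))"
  unfolding polar_dens_def Jfun_def sP_def
  by (simp add: algebra_simps power2_eq_square power3_eq_cube add_divide_distrib)

lemma polar_Jfun_int: "has_bochner_integral lborel (\<lambda>r. polar_dens r * (g r * Jfun p q c r))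
   (2 * pi * (p / (p + q)) * ((1 + c * q / (p + q)) * I1 + (c * q * p\<^sup>2 / (p + q)\<^sup>2) * I3))"
  unfolding polar_Jfun_eq I1_def I3_def
  by (intro has_bochner_integral_mult_right has_bochner_integral_add has_bochner_integral_integrable
        int_exp1 int_exp3 sP_nonneg)


lemma Jint_m2: "has_bochner_integral lborel (\<lambda>x::real\<times>real. kern p (x - z) * Wf q c (norm x)) (Jfun p q c (norm z))"
  unfolding Wf_def using Jint[OF p q, where c=c and z=z] by simp

lemma Wf_abs_le: "\<bar>Wf q (-2) r\<bar> \<le> Wf q 2 r"
proof -
  have "\<bar>1 + (-2) * q * r\<^sup>2\<bar> \<le> 1 + 2 * q * r\<^sup>2" using q by (simp add: abs_le_iff)
  then show ?thesis unfolding Wf_def by (simp add: abs_mult mult_right_mono)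
qed

lemma Phi_int: "integrable (lborel \<Otimes>\<^sub>M lborel) (\<lambda>(z, x). g (norm z) * kern p (x - z) * Wf q (-2) (norm x))"
proof (rule lborel_pair.Fubini_integrable)
  show m: "(\<lambda>(z, x). g (norm z) * kern p (x - z) * Wf q (-2) (norm x)) \<in> borel_measurable (lborel \<Otimes>\<^sub>M lborel)"
    by (intro meas_prod_lborel) (use Phi_meas[of "-2"] in \<open>simp add: case_prod_beta'\<close>)
  show "AE z in lborel. integrable lborel (\<lambda>x. (\<lambda>(z, x). g (norm z) * kern p (x - z) * Wf q (-2) (norm x)) (z, x))"
  proof (rule AE_I2)
    fix z :: "real \<times> real"
    have "integrable lborel (\<lambda>x::real\<times>real. g (norm z) * (kern p (x - z) * Wf q (-2) (norm x)))"
      using Jint_m2[where z=z and c="-2"] by (intro integrable_mult_right) (simp add: has_bochner_integral_iff)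
    then show "integrable lborel (\<lambda>x. (\<lambda>(z, x). g (norm z) * kern p (x - z) * Wf q (-2) (norm x)) (z, x))"
      by (simp add: mult.assoc)
  qed
  show "integrable lborel (\<lambda>z. \<integral>x. norm ((\<lambda>(z, x). g (norm z) * kern p (x - z) * Wf q (-2) (norm x)) (z, x)) \<partial>lborel)"
  proof (rule Bochner_Integration.integrable_bound)
    show "integrable lborel (\<lambda>z::real\<times>real. g (norm z) * Jfun p q 2 (norm z))"
    proof (subst polar_integrable)
      show "(\<lambda>r. g r * Jfun p q 2 r) \<in> borel_measurable borel"
        unfolding Jfun_def by measurable
      show "integrable lborel (\<lambda>r. polar_dens r * (g r * Jfun p q 2 r))"
        using polar_Jfun_int[of 2] by (simp add: has_bochner_integral_iff)
    qed
    have mn: "(\<lambda>(z, x). norm (g (norm z) * kern p (x - z) * Wf q (-2) (norm x))) \<in> borel_measurable (lborel \<Otimes>\<^sub>M lborel)"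
      using m by measurable
    show "(\<lambda>z. \<integral>x. norm ((\<lambda>(z, x). g (norm z) * kern p (x - z) * Wf q (-2) (norm x)) (z, x)) \<partial>lborel) \<in> borel_measurable lborel"
      using lborel.borel_measurable_lebesgue_integral[OF mn] by simp
    show "AE z in lborel. norm (\<integral>x. norm ((\<lambda>(z, x). g (norm z) * kern p (x - z) * Wf q (-2) (norm x)) (z, x)) \<partial>lborel)
        \<le> norm (g (norm z) * Jfun p q 2 (norm z))"
    proof (rule AE_I2)
      fix z :: "real \<times> real"
      have e: "norm (g (norm z) * kern p (x - z) * Wf q (-2) (norm x)) = g (norm z) * (kern p (x - z) * \<bar>Wf q (-2) (norm x)\<bar>)" for x
        using g0[of "norm z"] kern_nonneg[of p "x - z"] p by (simp add: abs_mult)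
      have ia: "integrable lborel (\<lambda>x. kern p (x - z) * \<bar>Wf q (-2) (norm x)\<bar>)"
      proof -
        have "integrable lborel (\<lambda>x. \<bar>kern p (x - z) * Wf q (-2) (norm x)\<bar>)"
          using Jint_m2[where z=z and c="-2"] by (intro integrable_abs) (simp add: has_bochner_integral_iff)
        then show ?thesis using kern_nonneg[of p] p by (simp add: abs_mult)
      qed
      have "(\<integral>x. kern p (x - z) * \<bar>Wf q (-2) (norm x)\<bar> \<partial>lborel) \<le> (\<integral>x. kern p (x - z) * Wf q 2 (norm x) \<partial>lborel)"
      proof (rule integral_mono)
        show "integrable lborel (\<lambda>x. kern p (x - z) * Wf q 2 (norm x))"
          using Jint_m2[where z=z and c=2] by (simp add: has_bochner_integral_iff)
        fix x :: "real \<times> real"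
        show "kern p (x - z) * \<bar>Wf q (-2) (norm x)\<bar> \<le> kern p (x - z) * Wf q 2 (norm x)"
          by (rule mult_left_mono[OF Wf_abs_le kern_nonneg]) (use p in simp)
      qed (rule ia)
      also have "\<dots> = Jfun p q 2 (norm z)"
        using Jint_m2[where z=z and c=2] by (simp add: has_bochner_integral_iff)
      finally have le: "(\<integral>x. kern p (x - z) * \<bar>Wf q (-2) (norm x)\<bar> \<partial>lborel) \<le> Jfun p q 2 (norm z)" .
      have nn: "0 \<le> (\<integral>x. kern p (x - z) * \<bar>Wf q (-2) (norm x)\<bar> \<partial>lborel)"
        by (intro Bochner_Integration.integral_nonneg mult_nonneg_nonneg abs_ge_zero kern_nonneg) (use p in simp)
      have "(\<integral>x. norm ((\<lambda>(z, x). g (norm z) * kern p (x - z) * Wf q (-2) (norm x)) (z, x)) \<partial>lborel)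
          = g (norm z) * (\<integral>x. kern p (x - z) * \<bar>Wf q (-2) (norm x)\<bar> \<partial>lborel)"
        unfolding case_prod_conv e by simp
      also have "\<dots> \<le> g (norm z) * Jfun p q 2 (norm z)"
        using le g0 by (intro mult_left_mono) auto
      finally show "norm (\<integral>x. norm ((\<lambda>(z, x). g (norm z) * kern p (x - z) * Wf q (-2) (norm x)) (z, x)) \<partial>lborel)
        \<le> norm (g (norm z) * Jfun p q 2 (norm z))"
        using nn g0[of "norm z"] by (simp add: e)
    qed
  qed
qed

lemma main_identity:
  "(LBINT r:{0..}. CG g p (r, 0) * (1 - 2 * q * r\<^sup>2) * r * exp (- q * r\<^sup>2))
     = (p / (p + q)) * ((1 + (-2) * q / (p + q)) * I1 + ((-2) * q * p\<^sup>2 / (p + q)\<^sup>2) * I3)"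
proof -
  have hm: "(\<lambda>r. CG g p (r, 0) * Wf q (-2) r) \<in> borel_measurable borel"
  proof -
    have "(\<lambda>r::real. CG g p (r, 0)) \<in> borel_measurable borel"
      by (rule measurable_compose[OF borel_measurable_continuous_onI CG_meas]) (intro continuous_intros)
    moreover have "Wf q (-2) \<in> borel_measurable borel"
      unfolding Wf_def by (intro borel_measurable_continuous_onI continuous_intros)
    ultimately show ?thesis by measurable
  qed
  have "(LBINT r:{0..}. CG g p (r, 0) * (1 - 2 * q * r\<^sup>2) * r * exp (- q * r\<^sup>2))
      = (\<integral>r. (1 / (2 * pi)) * (polar_dens r * (CG g p (r, 0) * Wf q (-2) r)) \<partial>lborel)"
    unfolding set_lebesgue_integral_def
    by (intro Bochner_Integration.integral_cong) (auto simp: polar_dens_def Wf_def indicator_def)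
  also have "\<dots> = (1 / (2 * pi)) * (\<integral>r. polar_dens r * (CG g p (r, 0) * Wf q (-2) r) \<partial>lborel)"
    by simp
  also have "(\<integral>r. polar_dens r * (CG g p (r, 0) * Wf q (-2) r) \<partial>lborel)
      = (\<integral>x. CG g p (norm x, 0) * Wf q (-2) (norm x) \<partial>(lborel :: (real \<times> real) measure))"
    using polar_integral[OF hm] by simp
  also have "\<dots> = (\<integral>x. (\<integral>z. g (norm z) * kern p (x - z) * Wf q (-2) (norm x) \<partial>lborel) \<partial>(lborel :: (real \<times> real) measure))"
    unfolding CG_radial unfolding CG_def by simp
  also have "\<dots> = (\<integral>z. (\<integral>x. g (norm z) * kern p (x - z) * Wf q (-2) (norm x) \<partial>lborel) \<partial>(lborel :: (real \<times> real) measure))"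
    using lborel_pair.Fubini_integral[OF Phi_int] by simp
  also have "\<dots> = (\<integral>z. g (norm z) * Jfun p q (-2) (norm z) \<partial>(lborel :: (real \<times> real) measure))"
  proof (intro Bochner_Integration.integral_cong refl)
    fix z :: "real \<times> real"
    have "(\<integral>x. g (norm z) * kern p (x - z) * Wf q (-2) (norm x) \<partial>lborel)
        = g (norm z) * (\<integral>x. kern p (x - z) * Wf q (-2) (norm x) \<partial>lborel)"
      by (simp add: mult.assoc)
    also have "\<dots> = g (norm z) * Jfun p q (-2) (norm z)"
      using Jint_m2[where z=z and c="-2"] by (simp add: has_bochner_integral_iff)
    finally show "(\<integral>x. g (norm z) * kern p (x - z) * Wf q (-2) (norm x) \<partial>lborel) = g (norm z) * Jfun p q (-2) (norm z)" .
  qed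
  also have "\<dots> = (\<integral>r. polar_dens r * (g r * Jfun p q (-2) r) \<partial>lborel)"
    by (rule polar_integral) (unfold Jfun_def, measurable)
  also have "\<dots> = 2 * pi * (p / (p + q)) * ((1 + (-2) * q / (p + q)) * I1 + ((-2) * q * p\<^sup>2 / (p + q)\<^sup>2) * I3)"
    using polar_Jfun_int[of "-2"] by (simp add: has_bochner_integral_iff)
  finally show ?thesis by simp
qed

end

lemma pow_fact_le_exp: "(x::real) \<ge> 0 \<Longrightarrow> x ^ n / fact n \<le> exp x"
proof -
  assume x: "x \<ge> 0"
  have s: "summable (\<lambda>n. x ^ n /\<^sub>R fact n)" using exp_converges[of x] by (rule sums_summable)
  have "sum (\<lambda>n. x ^ n /\<^sub>R fact n) {n} \<le> suminf (\<lambda>n. x ^ n /\<^sub>R fact n)"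
    by (rule sum_le_suminf[OF s]) (use x in auto)
  also have "\<dots> = exp x" using exp_converges[of x] by (simp add: sums_iff)
  finally show ?thesis by (simp add: divide_inverse mult.commute)
qed

lemma moment_bound:
  fixes c :: "nat \<Rightarrow> real" and \<epsilon> :: real
  assumes c0: "c m \<ge> 0" and m: "m > 0" and eps: "\<epsilon> \<ge> 0"
    and hb: "c m powr (1 / real m) \<le> \<epsilon> * sqrt (real m)"
  shows "c m \<le> (\<epsilon> * sqrt (real m)) ^ m"
proof (cases "c m = 0")
  case True
  then show ?thesis using eps by simp
next
  case False
  then have cp: "c m > 0" using c0 by simp
  have "(c m powr (1 / real m)) ^ m = (c m powr (1 / real m)) powr (real m)"
    using cp by (simp add: powr_realpow)
  also have "\<dots> = c m" using m cp by (simp add: powr_powr)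
  finally have e: "c m = (c m powr (1 / real m)) ^ m" by simp
  show ?thesis
    by (subst e, rule power_mono[OF hb]) simp
qed

lemma summable_moments:
  fixes c :: "nat \<Rightarrow> real" and s :: real
  assumes c0: "\<And>m. c m \<ge> 0"
    and co: "(\<lambda>m. c m powr (1 / real m)) \<in> o(\<lambda>m. sqrt (real m))"
    and s: "s \<ge> 0"
  shows "summable (\<lambda>n. c (2 * n) * s ^ n / fact n)"
proof -
  define \<epsilon> where "\<epsilon> = 1 / sqrt (4 * exp 1 * s + 1)"
  have "0 \<le> exp 1 * s" using s by simp
  then have pos: "4 * exp 1 * s + 1 > 0" by linarith
  have ep: "\<epsilon> > 0" using pos by (simp add: \<epsilon>_def)
  have e2: "\<epsilon>\<^sup>2 = 1 / (4 * exp 1 * s + 1)"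
    using pos by (simp add: \<epsilon>_def power_divide)
  have key: "2 * \<epsilon>\<^sup>2 * s * exp 1 \<le> 1 / 2"
    unfolding e2 using s pos by (simp add: field_simps)
  have "eventually (\<lambda>m. norm (c m powr (1 / real m)) \<le> \<epsilon> * norm (sqrt (real m))) at_top"
    by (rule landau_o.smallD[OF co ep])
  then obtain M where M: "\<And>m. m \<ge> M \<Longrightarrow> norm (c m powr (1 / real m)) \<le> \<epsilon> * norm (sqrt (real m))"
    by (auto simp: eventually_at_top_linorder)
  show ?thesis
  proof (rule summable_comparison_test'[where N="max M 1"])
    show "summable (\<lambda>n. (1 / 2 :: real) ^ n)" by (rule summable_geometric) simp
    fix n :: nat assume n: "max M 1 \<le> n"
    have m: "2 * n > 0" "2 * n \<ge> M" using n by auto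
    have hb: "c (2 * n) powr (1 / real (2 * n)) \<le> \<epsilon> * sqrt (real (2 * n))"
      using M[OF m(2)] c0[of "2 * n"] by simp
    have "c (2 * n) \<le> (\<epsilon> * sqrt (real (2 * n))) ^ (2 * n)"
      by (rule moment_bound[where c=c, OF c0 m(1) _ hb]) (use ep in simp)
    also have "\<dots> = ((\<epsilon> * sqrt (real (2 * n)))\<^sup>2) ^ n"
      by (simp add: power_mult)
    also have "\<dots> = (2 * \<epsilon>\<^sup>2 * real n) ^ n"
      by (simp add: power_mult_distrib)
    finally have cb: "c (2 * n) \<le> (2 * \<epsilon>\<^sup>2 * real n) ^ n" .
    have "norm (c (2 * n) * s ^ n / fact n) = c (2 * n) * s ^ n / fact n"
      using c0[of "2 * n"] s by simp
    also have "\<dots> \<le> (2 * \<epsilon>\<^sup>2 * real n) ^ n * s ^ n / fact n"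
      using cb s by (intro divide_right_mono mult_right_mono) auto
    also have "\<dots> = (2 * \<epsilon>\<^sup>2 * s) ^ n * (real n ^ n / fact n)"
      by (simp add: power_mult_distrib algebra_simps)
    also have "\<dots> \<le> (2 * \<epsilon>\<^sup>2 * s) ^ n * exp (real n)"
      using s by (intro mult_left_mono pow_fact_le_exp) auto
    also have "exp (real n) = exp 1 ^ n"
      using exp_of_nat_mult[of n 1] by simp
    also have "(2 * \<epsilon>\<^sup>2 * s) ^ n * exp 1 ^ n = (2 * \<epsilon>\<^sup>2 * s * exp 1) ^ n"
      by (simp add: power_mult_distrib)
    also have "\<dots> \<le> (1 / 2) ^ n"
      using key s by (intro power_mono) auto
    finally show "norm (c (2 * n) * s ^ n / fact n) \<le> (1 / 2) ^ n" .
  qed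
qed

lemma summable_moments_shift:
  fixes c :: "nat \<Rightarrow> real" and s :: real
  assumes c0: "\<And>m. c m \<ge> 0"
    and co: "(\<lambda>m. c m powr (1 / real m)) \<in> o(\<lambda>m. sqrt (real m))"
    and s: "s > 0"
  shows "summable (\<lambda>n. c (2 * n + 2) * s ^ n / fact n)"
proof -
  have "summable (\<lambda>n. c (2 * n) * (2 * s) ^ n / fact n)"
    by (rule summable_moments[OF c0 co]) (use s in simp)
  then have sm: "summable (\<lambda>n. c (2 * Suc n) * (2 * s) ^ Suc n / fact (Suc n))"
    by (subst summable_Suc_iff)
  have sm2: "summable (\<lambda>n. (1 / s) * (c (2 * Suc n) * (2 * s) ^ Suc n / fact (Suc n)))"
    by (rule summable_mult[OF sm])
  show ?thesis
  proof (rule summable_comparison_test'[OF sm2, where N=0])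
    fix n :: nat
    have np: "real (Suc n) \<le> 2 ^ Suc n"
      using of_nat_less_two_power[of "Suc n", where 'a=real] by (simp add: less_imp_le)
    have "norm (c (2 * n + 2) * s ^ n / fact n) = c (2 * Suc n) * s ^ n / fact n"
      using c0[of "2 * n + 2"] s by simp
    also have "\<dots> = (1 / s) * (c (2 * Suc n) * (real (Suc n) * s ^ Suc n) / fact (Suc n))"
      using s by (simp add: field_simps del: of_nat_Suc)
    also have "\<dots> \<le> (1 / s) * (c (2 * Suc n) * (2 ^ Suc n * s ^ Suc n) / fact (Suc n))"
      using s c0[of "2 * Suc n"] np
      by (intro mult_left_mono divide_right_mono mult_right_mono) auto
    also have "\<dots> = (1 / s) * (c (2 * Suc n) * (2 * s) ^ Suc n / fact (Suc n))"
      by (simp add: power_mult_distrib)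
    finally show "norm (c (2 * n + 2) * s ^ n / fact n) \<le> (1 / s) * (c (2 * Suc n) * (2 * s) ^ Suc n / fact (Suc n))" .
  qed
qed

lemma series_integral:
  fixes g :: "real \<Rightarrow> real" and s :: real and j :: nat
  assumes gm[measurable]: "g \<in> borel_measurable borel" and g0: "\<And>r. 0 \<le> g r"
    and mom: "\<And>n. integrable lborel (\<lambda>r. indicator {0..} r * (g r * r ^ (2 * n + 1)))"
    and s: "s \<ge> 0"
    and summ: "summable (\<lambda>n. (\<integral>r. indicator {0..} r * (g r * r ^ (2 * n + 2 * j + 1)) \<partial>lborel) * s ^ n / fact n)"
  shows "(\<lambda>n. (\<integral>r. indicator {0..} r * (g r * r ^ (2 * n + 2 * j + 1)) \<partial>lborel) * (- s) ^ n / fact n)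
          sums (\<integral>r. indicator {0..} r * (g r * r ^ (2 * j + 1)) * exp (- s * r\<^sup>2) \<partial>lborel)"
proof -
  define u where "u = (\<lambda>n r. (- s) ^ n / fact n * (indicator {0..} r * (g r * r ^ (2 * n + 2 * j + 1))))"
  have mom': "integrable lborel (\<lambda>r. indicator {0..} r * (g r * r ^ (2 * n + 2 * j + 1)))" for n
    using mom[of "n + j"] by (simp add: algebra_simps)
  have ui: "integrable lborel (u n)" for n
    unfolding u_def by (intro integrable_mult_right mom')
  have nn: "0 \<le> indicator {0..} r * (g r * r ^ k)" for r :: real and k
    using g0[of r] by (simp add: indicator_def)
  have un0: "norm (u n r) = s ^ n / fact n * (indicator {0..} r * (g r * r ^ (2 * n + 2 * j + 1)))" for n r
  proof -
    have "norm (u n r) = \<bar>(- s) ^ n / fact n\<bar> * (indicator {0..} r * (g r * r ^ (2 * n + 2 * j + 1)))"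
      unfolding u_def real_norm_def abs_mult[of "(- s) ^ n / fact n"] abs_of_nonneg[OF nn] ..
    also have "\<bar>(- s) ^ n / fact n\<bar> = s ^ n / fact n" using s by (simp add: power_abs)
    finally show ?thesis .
  qed
  have un: "norm (u n r) = (s * r\<^sup>2) ^ n / fact n * (indicator {0..} r * (g r * r ^ (2 * j + 1)))" for n r
  proof -
    have "norm (u n r) = s ^ n / fact n * (indicator {0..} r * (g r * r ^ (2 * n + 2 * j + 1)))"
      by (rule un0)
    also have "\<dots> = (s * r\<^sup>2) ^ n / fact n * (indicator {0..} r * (g r * r ^ (2 * j + 1)))"
      by (simp add: power_mult_distrib power_add power_mult[symmetric] algebra_simps)
    finally show ?thesis .
  qed
  have "(\<lambda>n. integral\<^sup>L lborel (u n)) sums (\<integral>x. (\<Sum>n. u n x) \<partial>lborel)"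
  proof (rule sums_integral)
    show "integrable lborel (u n)" for n by (rule ui)
    show "AE x in lborel. summable (\<lambda>n. norm (u n x))"
    proof (rule AE_I2)
      fix x :: real
      have "summable (\<lambda>n. (s * x\<^sup>2) ^ n /\<^sub>R fact n)" using exp_converges by (rule sums_summable)
      then have "summable (\<lambda>n. (s * x\<^sup>2) ^ n / fact n * (indicator {0..} x * (g x * x ^ (2 * j + 1))))"
        by (intro summable_mult2) (simp add: divide_inverse mult.commute)
      then show "summable (\<lambda>n. norm (u n x))" unfolding un .
    qed
    have "(\<integral>x. norm (u n x) \<partial>lborel) = (\<integral>r. indicator {0..} r * (g r * r ^ (2 * n + 2 * j + 1)) \<partial>lborel) * s ^ n / fact n" for n
    proof -
      have "(\<integral>x. norm (u n x) \<partial>lborel) = (\<integral>x. s ^ n / fact n * (indicator {0..} x * (g x * x ^ (2 * n + 2 * j + 1))) \<partial>lborel)"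
        unfolding un0 ..
      then show ?thesis by simp
    qed
    then show "summable (\<lambda>n. \<integral>x. norm (u n x) \<partial>lborel)" using summ by simp
  qed
  moreover have "integral\<^sup>L lborel (u n) = (\<integral>r. indicator {0..} r * (g r * r ^ (2 * n + 2 * j + 1)) \<partial>lborel) * (- s) ^ n / fact n" for n
    unfolding u_def by simp
  moreover have "(\<Sum>n. u n x) = indicator {0..} x * (g x * x ^ (2 * j + 1)) * exp (- s * x\<^sup>2)" for x
  proof -
    have e: "u n x = (- s * x\<^sup>2) ^ n /\<^sub>R fact n * (indicator {0..} x * (g x * x ^ (2 * j + 1)))" for n
    proof -
      have pw: "(- s * x\<^sup>2) ^ n = (- s) ^ n * x ^ (2 * n)"
        by (simp only: power_mult_distrib power_mult[symmetric])
      have pa: "x ^ (2 * n + 2 * j + 1) = x ^ (2 * n) * x ^ (2 * j + 1)" by (simp add: power_add[symmetric] add.assoc)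
      show ?thesis unfolding u_def pw pa by (simp add: divide_inverse mult_ac)
    qed
    have "(\<lambda>n. (- s * x\<^sup>2) ^ n /\<^sub>R fact n * (indicator {0..} x * (g x * x ^ (2 * j + 1))))
        sums (exp (- s * x\<^sup>2) * (indicator {0..} x * (g x * x ^ (2 * j + 1))))"
      by (intro sums_mult2 exp_converges)
    then show ?thesis unfolding e by (simp add: sums_iff mult.commute)
  qed
  ultimately show ?thesis by simp
qed

lemma binom_sum1:
  fixes t :: real
  shows "(\<Sum>k=0..n. (-1) ^ (n - k) * real (n choose k) * t ^ k) = (t - 1) ^ n"
proof -
  have "(t + (-1)) ^ n = (\<Sum>k\<le>n. real (n choose k) * t ^ k * (-1) ^ (n - k))"
    by (rule binomial_ring)
  then show ?thesis by (simp add: atMost_atLeast0 mult_ac)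
qed

lemma binom_sum2:
  fixes t :: real
  shows "(\<Sum>k=0..Suc m. (-1) ^ (Suc m - k) * real (Suc m choose k) * real k * t ^ k) = real (Suc m) * t * (t - 1) ^ m"
proof -
  have "(\<Sum>k=0..Suc m. (-1) ^ (Suc m - k) * real (Suc m choose k) * real k * t ^ k)
      = (\<Sum>i=0..m. (-1) ^ (Suc m - Suc i) * real (Suc m choose Suc i) * real (Suc i) * t ^ Suc i)"
    by (subst sum.atLeast0_atMost_Suc_shift) simp
  also have "\<dots> = (\<Sum>i=0..m. real (Suc m) * t * ((-1) ^ (m - i) * real (m choose i) * t ^ i))"
  proof (rule sum.cong[OF refl])
    fix i assume "i \<in> {0..m}"
    have "real (Suc m choose Suc i) * real (Suc i) = real (Suc m) * real (m choose i)"
      using Suc_times_binomial[of i m] by (metis of_nat_mult mult.commute)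
    then show "(-1) ^ (Suc m - Suc i) * real (Suc m choose Suc i) * real (Suc i) * t ^ Suc i
        = real (Suc m) * t * ((-1) ^ (m - i) * real (m choose i) * t ^ i)"
      by (simp add: mult_ac)
  qed
  also have "\<dots> = real (Suc m) * t * (t - 1) ^ m"
    by (simp add: sum_distrib_left[symmetric] binom_sum1)
  finally show ?thesis .
qed

lemma term_eq:
  fixes c gam L b s D :: real and n :: nat
  assumes b: "b \<noteq> 0"
    and X: "gam\<^sup>2 * L * b\<^sup>2 * ((b\<^sup>2 + 1) / (b\<^sup>2 + 2) - 1) = - s"
    and D: "D = 2 * (gam\<^sup>2 * L) * ((b\<^sup>2 + 1) / (b\<^sup>2 + 2))"
  shows "c * gam ^ (2 * n) * L ^ n / fact n *
            (\<Sum>k=0..n. (-1) ^ (n - k) * real (n choose k) * (b\<^sup>2 - 2 * real k)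
               * (b powi (2 * int n - 2)) * ((b\<^sup>2 + 1) / (b\<^sup>2 + 2)) ^ k)
       = c * (- s) ^ n / fact n - D * (if n = 0 then 0 else c * (- s) ^ (n - 1) / fact (n - 1))"
proof -
  define u where "u = b\<^sup>2"
  define tt where "tt = (b\<^sup>2 + 1) / (b\<^sup>2 + 2)"
  define G where "G = gam\<^sup>2 * L"
  define Bp where "Bp = b powi (2 * int n - 2)"
  have u0: "u \<noteq> 0" using b by (simp add: u_def)
  have XX: "G * u * (tt - 1) = - s" using X by (simp add: G_def u_def tt_def)
  have D': "D = 2 * G * tt" using D by (simp add: G_def tt_def)
  have gp: "gam ^ (2 * n) * L ^ n = G ^ n"
    by (simp add: G_def power_mult power_mult_distrib)
  have sum_eq: "(\<Sum>k=0..n. (-1) ^ (n - k) * real (n choose k) * (u - 2 * real k) * Bp * tt ^ k)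
      = Bp * (u * (\<Sum>k=0..n. (-1) ^ (n - k) * real (n choose k) * tt ^ k)
              - 2 * (\<Sum>k=0..n. (-1) ^ (n - k) * real (n choose k) * real k * tt ^ k))"
    by (simp add: sum_distrib_left sum_subtractf[symmetric] algebra_simps)
  have lhs: "c * gam ^ (2 * n) * L ^ n / fact n *
            (\<Sum>k=0..n. (-1) ^ (n - k) * real (n choose k) * (b\<^sup>2 - 2 * real k)
               * (b powi (2 * int n - 2)) * ((b\<^sup>2 + 1) / (b\<^sup>2 + 2)) ^ k)
      = c * G ^ n / fact n * (Bp * (u * (\<Sum>k=0..n. (-1) ^ (n - k) * real (n choose k) * tt ^ k)
              - 2 * (\<Sum>k=0..n. (-1) ^ (n - k) * real (n choose k) * real k * tt ^ k)))"
    unfolding sum_eq[symmetric] gp[symmetric] Bp_def[symmetric]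
    unfolding tt_def[symmetric] unfolding u_def[symmetric]
    by (simp add: mult_ac)
  show ?thesis
  proof (cases n)
    case 0
    have "Bp = inverse u" unfolding Bp_def u_def 0
      by (simp add: power_int_minus[of b 2, simplified])
    then show ?thesis unfolding lhs using u0 0 by simp
  next
    case (Suc m)
    have Bp: "Bp = u ^ m"
    proof -
      have e: "2 * int n - 2 = int (2 * m)" using Suc by simp
      have "Bp = b powi int (2 * m)" by (simp only: Bp_def e)
      also have "\<dots> = b ^ (2 * m)" by (rule power_int_of_nat)
      also have "\<dots> = u ^ m" by (simp add: u_def power_mult)
      finally show ?thesis .
    qed
    have "c * G ^ n / fact n * (Bp * (u * (\<Sum>k=0..n. (-1) ^ (n - k) * real (n choose k) * tt ^ k)
              - 2 * (\<Sum>k=0..n. (-1) ^ (n - k) * real (n choose k) * real k * tt ^ k)))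
        = c * G ^ Suc m / fact (Suc m) * (u ^ m * (u * (tt - 1) ^ Suc m - 2 * (real (Suc m) * tt * (tt - 1) ^ m)))"
      unfolding Suc Bp binom_sum1 binom_sum2 ..
    also have "\<dots> = c * (G * u * (tt - 1)) ^ Suc m / fact (Suc m)
        - (2 * G * tt) * (c * (G * u * (tt - 1)) ^ m / fact m)"
    proof -
      define X where "X = G * u * (tt - 1)"
      have t1: "c * G ^ Suc m / fact (Suc m) * (u ^ m * (u * (tt - 1) ^ Suc m)) = c * X ^ Suc m / fact (Suc m)"
        by (simp add: X_def power_mult_distrib mult_ac)
      have fs: "(fact (Suc m) :: real) = real (Suc m) * fact m" by (rule fact_Suc)
      have t2: "c * G ^ Suc m / fact (Suc m) * (u ^ m * (2 * (real (Suc m) * tt * (tt - 1) ^ m)))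
          = (2 * G * tt) * (c * X ^ m / fact m)"
        unfolding fs X_def by (simp add: power_mult_distrib mult_ac del: of_nat_Suc)
      show ?thesis unfolding X_def[symmetric] t1[symmetric] t2[symmetric] by (simp add: right_diff_distrib)
    qed
    also have "\<dots> = c * (- s) ^ n / fact n - D * (if n = 0 then 0 else c * (- s) ^ (n - 1) / fact (n - 1))"
      unfolding XX D' Suc by simp
    finally show ?thesis unfolding lhs .
  qed
qed

lemma params:
  fixes p p' :: real
  assumes p: "p > 0" and p': "0 < p'" and lt: "p' < p"
  shows "beta_ratio p p' \<noteq> 0"
    and "(gamma_conv p p')\<^sup>2 * ln 2 * (beta_ratio p p')\<^sup>2 * (((beta_ratio p p')\<^sup>2 + 1) / ((beta_ratio p p')\<^sup>2 + 2) - 1) = - (p * p' / (p + p'))"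
    and "2 * ((gamma_conv p p')\<^sup>2 * ln 2) * (((beta_ratio p p')\<^sup>2 + 1) / ((beta_ratio p p')\<^sup>2 + 2)) = 2 * p\<^sup>2 * p' / ((p + p') * (p - p'))"
proof -
  define l where "l = ln (2::real)"
  have l: "l > 0" by (simp add: l_def)
  have b2: "(Phi_b p)\<^sup>2 = 4 * l / p" using p l by (simp add: Phi_b_def l_def power_mult_distrib)
  have f2: "(Phi_fit p')\<^sup>2 = 4 * l / p'" using p' l by (simp add: Phi_fit_def l_def power_mult_distrib)
  have dpos: "4 * l / p' - 4 * l / p > 0"
    using p p' lt l by (simp add: field_simps)
  have d2: "(Phi_d p p')\<^sup>2 = 4 * l / p' - 4 * l / p"
    unfolding Phi_d_def b2 f2 using dpos by simp
  have dne: "Phi_d p p' \<noteq> 0" using d2 dpos by auto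
  have bne: "Phi_b p \<noteq> 0" using b2 p l by auto
  have beta2: "(beta_ratio p p')\<^sup>2 = (p - p') / p'"
    unfolding beta_ratio_def power_divide d2 b2 using p p' l by (simp add: field_simps)
  have gam2: "(gamma_conv p p')\<^sup>2 * ln 2 = p * p' / (p - p')"
    unfolding gamma_conv_def power_divide d2 l_def[symmetric] using p p' lt l by (simp add: field_simps)
  have tt: "((beta_ratio p p')\<^sup>2 + 1) / ((beta_ratio p p')\<^sup>2 + 2) = p / (p + p')"
    unfolding beta2 using p p' by (simp add: field_simps)
  have "(beta_ratio p p')\<^sup>2 > 0" unfolding beta2 using p' lt by simp
  then show "beta_ratio p p' \<noteq> 0" by auto
  show "(gamma_conv p p')\<^sup>2 * ln 2 * (beta_ratio p p')\<^sup>2 * (((beta_ratio p p')\<^sup>2 + 1) / ((beta_ratio p p')\<^sup>2 + 2) - 1) = - (p * p' / (p + p'))"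
  proof -
    have a: "p * p' / (p - p') * ((p - p') / p') = p" using p' lt by (simp add: field_simps)
    have b: "p / (p + p') - 1 = - (p' / (p + p'))" using p p' by (simp add: field_simps)
    show ?thesis unfolding tt unfolding gam2 beta2 unfolding a b by simp
  qed
  show "2 * ((gamma_conv p p')\<^sup>2 * ln 2) * (((beta_ratio p p')\<^sup>2 + 1) / ((beta_ratio p p')\<^sup>2 + 2)) = 2 * p\<^sup>2 * p' / ((p + p') * (p - p'))"
    unfolding tt gam2 using p p' lt by (simp add: field_simps power2_eq_square)
qed

theorem mainTheorem2:
  fixes f :: "real \<Rightarrow> real" and p p' :: real
  assumes "cond1 f" and "cond2b f"
    and "p > 0" and "0 < p'" and "p' < p"
    and "(LBINT r:{0..}. conv_gauss f p r * (1 - 2 * p' * r\<^sup>2) * r * exp (- p' * r\<^sup>2)) = 0"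
  shows "(\<lambda>n. radial_moment f (2 * n) * gamma_conv p p' ^ (2 * n) * ln 2 ^ n / fact n *
            (\<Sum>k=0..n. (-1) ^ (n - k) * real (n choose k) * ((beta_ratio p p')\<^sup>2 - 2 * real k)
               * (beta_ratio p p' powi (2 * int n - 2))
               * (((beta_ratio p p')\<^sup>2 + 1) / ((beta_ratio p p')\<^sup>2 + 2)) ^ k)) sums 0"
proof -
  note p = \<open>p > 0\<close> and p' = \<open>0 < p'\<close> and lt = \<open>p' < p\<close> and hyp = assms(6)
  have c1: "(\<exists>F. \<forall>r\<ge>0. 0 \<le> f r \<and> f r \<le> F) \<and> moment_exists f 0 \<and> radial_moment f 0 > 0"
    using assms(1) unfolding cond1_def .
  obtain F where F: "\<forall>r\<ge>0. 0 \<le> f r \<and> f r \<le> F"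
    using conjunct1[OF c1] by (rule exE)
  have me0: "moment_exists f 0" using c1 by (rule conjE) (rule conjunct1)
  have c2: "(\<forall>n. moment_exists f (2 * n)) \<and> (\<lambda>n. radial_moment f n powr (1 / real n)) \<in> o(\<lambda>n. sqrt (real n))"
    using assms(2) unfolding cond2b_def .
  have me: "moment_exists f (2 * n)" for n using conjunct1[OF c2] by (rule spec)
  have co: "(\<lambda>n. radial_moment f n powr (1 / real n)) \<in> o(\<lambda>n. sqrt (real n))"
    using c2 by (rule conjunct2)
  define fpos where "fpos = (\<lambda>r::real. if 0 \<le> r then f r else 0)"
  have fpos_eq: "indicator {0..} r *\<^sub>R (f r * r ^ k) = indicator {0..} r * (fpos r * r ^ k)" for r :: real and k
    by (auto simp: fpos_def indicator_def)
  have "0 \<le> f 0 \<and> f 0 \<le> F" using F by simp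
  then have F0: "0 \<le> F" by linarith
  have g0: "\<And>r. 0 \<le> fpos r" using F by (auto simp: fpos_def)
  have gF: "\<And>r. fpos r \<le> F" using F F0 by (auto simp: fpos_def)
  define h0 where "h0 = (\<lambda>r. indicator {0..} r *\<^sub>R (f r * r ^ (0 + 1)))"
  have h0m[measurable]: "h0 \<in> borel_measurable borel"
  proof -
    have "integrable lborel h0"
      using me0 unfolding moment_exists_def set_integrable_def h0_def .
    then have "h0 \<in> borel_measurable lborel"
      by (rule borel_measurable_integrable)
    then show ?thesis by simp
  qed
  have feq: "fpos = (\<lambda>r. if r = 0 then f 0 else h0 r / r)"
    by (auto simp: fun_eq_iff fpos_def indicator_def h0_def)
  have "(\<lambda>r. if r = 0 then f 0 else h0 r / r) \<in> borel_measurable borel"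
    by measurable
  then have fm[measurable]: "fpos \<in> borel_measurable borel"
    unfolding feq .
  have mom: "integrable lborel (\<lambda>r. indicator {0..} r * (fpos r * r ^ (2 * n + 1)))" for n
    using me[of n] unfolding moment_exists_def set_integrable_def fpos_eq .
  have i1: "integrable lborel (\<lambda>r. indicator {0..} r * (fpos r * r))"
    using mom[of 0] by simp
  have i3: "integrable lborel (\<lambda>r. indicator {0..} r * (fpos r * r ^ 3))"
    using mom[of 1] by simp
  have rm: "radial_moment f m = 2 * pi * (\<integral>r. indicator {0..} r * (fpos r * r ^ (m + 1)) \<partial>lborel)" for m
    unfolding radial_moment_def set_lebesgue_integral_def fpos_eq ..
  have c0: "radial_moment f m \<ge> 0" for m
  proof -
    have nn: "0 \<le> indicator {0..} r * (fpos r * r ^ (m + 1))" for r :: real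
      using g0[of r] by (cases "0 \<le> r") (simp_all add: indicator_def)
    have "0 \<le> (\<integral>r. indicator {0..} r * (fpos r * r ^ (m + 1)) \<partial>lborel)"
      by (rule Bochner_Integration.integral_nonneg) (rule nn)
    then show ?thesis unfolding rm by simp
  qed
  have conv: "conv_gauss f p r = CG fpos p (r, 0)" for r
    unfolding conv_gauss_def CG_def
  proof (intro Bochner_Integration.integral_cong refl)
    fix z :: "real \<times> real"
    have n: "norm z = sqrt ((fst z)\<^sup>2 + (snd z)\<^sup>2)" by (simp add: norm_prod_def)
    have n2: "(norm ((r, 0) - z))\<^sup>2 = (r - fst z)\<^sup>2 + (snd z)\<^sup>2" by (simp add: norm_sq_prod)
    show "f (sqrt ((fst z)\<^sup>2 + (snd z)\<^sup>2)) * (p / pi) * exp (- p * ((r - fst z)\<^sup>2 + (snd z)\<^sup>2))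
        = fpos (norm z) * kern p ((r, 0) - z)"
      unfolding kern_def n2 fpos_def n[symmetric] by simp
  qed
  note MI = main_identity[OF fm g0 gF i1 i3 p p']
  define P where "P = p + p'"
  have P: "P > 0" using p p' by (simp add: P_def)
  define s where "s = p * p' / (p + p')"
  have s: "s > 0" using p p' by (simp add: s_def)
  define D where "D = 2 * p\<^sup>2 * p' / ((p + p') * (p - p'))"
  define J1 where "J1 = I1 fpos p p'"
  define J3 where "J3 = I3 fpos p p'"
  have J1: "J1 = (\<integral>r. indicator {0..} r * (fpos r * r ^ (2 * 0 + 1)) * exp (- s * r\<^sup>2) \<partial>lborel)"
    by (simp add: J1_def I1_def[OF fm g0 gF i1 i3 p p'] s_def sP_def[OF fm g0 gF i1 i3 p p'])
  have J3: "J3 = (\<integral>r. indicator {0..} r * (fpos r * r ^ (2 * 1 + 1)) * exp (- s * r\<^sup>2) \<partial>lborel)"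
    by (simp add: J3_def I3_def[OF fm g0 gF i1 i3 p p'] s_def sP_def[OF fm g0 gF i1 i3 p p'])
  have "(p / (p + p')) * ((1 + (-2) * p' / (p + p')) * J1 + ((-2) * p' * p\<^sup>2 / (p + p')\<^sup>2) * J3) = 0"
    using MI hyp unfolding conv J1_def J3_def by simp
  then have h: "(1 + (-2) * p' / (p + p')) * J1 + ((-2) * p' * p\<^sup>2 / (p + p')\<^sup>2) * J3 = 0"
    using p p' by simp
  have a: "1 + (-2) * p' / (p + p') = (p - p') / (p + p')" using p p' by (simp add: field_simps)
  define A where "A = (p - p') / (p + p')"
  define B where "B = 2 * p' * p\<^sup>2 / (p + p')\<^sup>2"
  have A0: "A \<noteq> 0" using p p' lt by (simp add: A_def)
  have e: "A * J1 = B * J3" using h unfolding a A_def[symmetric] B_def by simp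
  have P0: "p + p' \<noteq> 0" and d0: "p - p' \<noteq> 0" using p p' lt by auto
  have DA: "D * A = B"
  proof -
    have "D * A = (2 * p\<^sup>2 * p' * (p - p')) / (((p + p') * (p + p')) * (p - p'))"
      unfolding D_def A_def times_divide_times_eq by (simp add: mult_ac)
    also have "\<dots> = (2 * p\<^sup>2 * p') / ((p + p') * (p + p'))"
      using d0 by (rule nonzero_mult_divide_mult_cancel_right)
    also have "\<dots> = B" unfolding B_def power2_eq_square by (simp add: mult_ac)
    finally show ?thesis .
  qed
  have BA: "B / A = D"
    using DA A0 by (simp add: field_simps)
  have JJ: "J1 = D * J3"
  proof -
    have "J1 = (A * J1) / A" using A0 by simp
    also have "\<dots> = B / A * J3" unfolding e by simp
    finally show ?thesis unfolding BA .
  qed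
  have sum1: "(\<lambda>n. radial_moment f (2 * n) * (- s) ^ n / fact n) sums (2 * pi * J1)"
  proof -
    have "summable (\<lambda>n. radial_moment f (2 * n) * s ^ n / fact n)"
      by (rule summable_moments[OF c0 co]) (use s in simp)
    then have "summable (\<lambda>n. radial_moment f (2 * n) * s ^ n / fact n / (2 * pi))"
      by (rule summable_divide)
    then have "summable (\<lambda>n. (\<integral>r. indicator {0..} r * (fpos r * r ^ (2 * n + 2 * 0 + 1)) \<partial>lborel) * s ^ n / fact n)"
      unfolding rm by simp
    from series_integral[OF fm g0 mom _ this] s
    have "(\<lambda>n. (\<integral>r. indicator {0..} r * (fpos r * r ^ (2 * n + 2 * 0 + 1)) \<partial>lborel) * (- s) ^ n / fact n) sums J1"
      unfolding J1 by simp
    then have "(\<lambda>n. 2 * pi * ((\<integral>r. indicator {0..} r * (fpos r * r ^ (2 * n + 2 * 0 + 1)) \<partial>lborel) * (- s) ^ n / fact n)) sums (2 * pi * J1)"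
      by (rule sums_mult)
    then show ?thesis unfolding rm by (simp add: algebra_simps)
  qed
  have sum3: "(\<lambda>n. radial_moment f (2 * n + 2) * (- s) ^ n / fact n) sums (2 * pi * J3)"
  proof -
    have "summable (\<lambda>n. radial_moment f (2 * n + 2) * s ^ n / fact n)"
      by (rule summable_moments_shift[OF c0 co s])
    then have "summable (\<lambda>n. radial_moment f (2 * n + 2) * s ^ n / fact n / (2 * pi))"
      by (rule summable_divide)
    then have "summable (\<lambda>n. (\<integral>r. indicator {0..} r * (fpos r * r ^ (2 * n + 2 * 1 + 1)) \<partial>lborel) * s ^ n / fact n)"
      unfolding rm by (simp add: algebra_simps)
    from series_integral[OF fm g0 mom _ this] s
    have "(\<lambda>n. (\<integral>r. indicator {0..} r * (fpos r * r ^ (2 * n + 2 * 1 + 1)) \<partial>lborel) * (- s) ^ n / fact n) sums J3"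
      unfolding J3 by simp
    then have "(\<lambda>n. 2 * pi * ((\<integral>r. indicator {0..} r * (fpos r * r ^ (2 * n + 2 * 1 + 1)) \<partial>lborel) * (- s) ^ n / fact n)) sums (2 * pi * J3)"
      by (rule sums_mult)
    then show ?thesis unfolding rm by (simp add: algebra_simps)
  qed
  define d where "d = (\<lambda>n. if n = 0 then 0 else radial_moment f (2 * n) * (- s) ^ (n - 1) / fact (n - 1))"
  have "(\<lambda>n. d (Suc n)) sums (2 * pi * J3)"
    using sum3 by (simp add: d_def algebra_simps)
  then have sumd: "d sums (2 * pi * J3)"
    by (subst (asm) sums_Suc_iff) (simp add: d_def)
  have "(\<lambda>n. radial_moment f (2 * n) * (- s) ^ n / fact n - D * d n) sums (2 * pi * J1 - D * (2 * pi * J3))"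
    by (intro sums_diff sums_mult sum1 sumd)
  moreover have "2 * pi * J1 - D * (2 * pi * J3) = 0" unfolding JJ by simp
  moreover have "radial_moment f (2 * n) * gamma_conv p p' ^ (2 * n) * ln 2 ^ n / fact n *
            (\<Sum>k=0..n. (-1) ^ (n - k) * real (n choose k) * ((beta_ratio p p')\<^sup>2 - 2 * real k)
               * (beta_ratio p p' powi (2 * int n - 2))
               * (((beta_ratio p p')\<^sup>2 + 1) / ((beta_ratio p p')\<^sup>2 + 2)) ^ k)
      = radial_moment f (2 * n) * (- s) ^ n / fact n - D * d n" for n
    unfolding d_def
    by (rule term_eq[OF params(1)[OF p p' lt]])
       (use params(2,3)[OF p p' lt] in \<open>simp_all add: s_def D_def\<close>)
  ultimately show ?thesis by simp
qed

end
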